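(* There exists an absolute constant $C$ such that the following holds. Let $N\in\mathbb N\cup\{0\}$, $\kappa\in(0,1)$, and $\rho_0(r,\theta)=\sum_{\ell=0}^{2^N-1}\chi_{(\ell2^{-N},(\ell+1)2^{-N}]}(r)f^\ell(\theta)$ with each $f^\ell\in L^\infty$ $2\pi$-periodic and $\int_0^{2\pi}f^\ell=0$; let $\rho$ be the corresponding solution. Then for every integer $M\le N$ and every $Q\in\mathcal Q_M$: (a) if $t\ge C\frac{2^N}{\kappa}$, then $\big|\fint_Q\rho(t,\cdot)\big|\le\frac\kappa4\|\rho(t,\cdot)\|_{L^\infty}$; (b) if $t\ge C2^{M+N}$, then $\big|\fint_Q\rho(t,\cdot)\big|\le2^{-M}\|\rho(t,\cdot)\|_{L^\infty}$.
   Context: $B_1\subset\mathbb R^2$ open unit disk, polar coordinates $(r,\theta)$, $\chi_I$ indicator of $I$, $\fint_Q=\frac1{|Q|}\int_Q$. Velocity $u(r,\theta)=2\pi r^2(\sin\theta,-\cos\theta)$; $\rho(t,\cdot)$ solves $\partial_t\rho+\operatorname{div}(u\rho)=0$, $\rho(0)=\rho_0$, explicitly $\rho(t,r,\theta)=\rho_0(r,\theta+2\pi tr)$. Annular tiling: for $M\in\mathbb N$, $i=0,\dots,2^M-1$, $j=0,\dots,i$, $Q^M_{ij}=\{(r,\theta): r\in(i2^{-M},(i+1)2^{-M}],\ \theta\in 2\pi(\tfrac{j}{i+1},\tfrac{j+1}{i+1}]\}$; $\mathcal Q_M$ is the family of all $Q^M_{ij}$. *)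

theory Defs
  imports "HOL-Analysis.Analysis" "HOL-Probability.Essential_Supremum"
begin

text \<open>Everything is written in polar coordinates (r, theta); a point of the plane is
  represented by the pair (r, theta), and Lebesgue measure of the plane becomes
  r dr dtheta.  The open unit disk (up to the null set {0}) is parametrised by
  r in (0,1], theta in (0, 2 pi].\<close>

definition disk_polar :: "(real \<times> real) set" where
  "disk_polar = {0<..1} \<times> {0<..2*pi}"

definition rho0 :: "nat \<Rightarrow> (nat \<Rightarrow> real \<Rightarrow> real) \<Rightarrow> real \<Rightarrow> real \<Rightarrow> real" where
  "rho0 N f r \<theta> = (\<Sum>l<2^N. indicator {real l / 2^N <.. (real l + 1) / 2^N} r * f l \<theta>)"

definition rho :: "nat \<Rightarrow> (nat \<Rightarrow> real \<Rightarrow> real) \<Rightarrow> real \<Rightarrow> real \<times> real \<Rightarrow> real" where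
  "rho N f t x = rho0 N f (fst x) (snd x + 2 * pi * t * fst x)"

definition Qcell :: "nat \<Rightarrow> nat \<Rightarrow> nat \<Rightarrow> (real \<times> real) set" where
  "Qcell M i j = {real i / 2^M <.. (real i + 1) / 2^M} \<times>
                 {2 * pi * (real j / (real i + 1)) <.. 2 * pi * ((real j + 1) / (real i + 1))}"

definition Qfam :: "nat \<Rightarrow> (real \<times> real) set set" where
  "Qfam M = {Qcell M i j | i j. i < 2^M \<and> j \<le> i}"

text \<open>Average over Q with respect to the planar Lebesgue measure, i.e. r dr dtheta.\<close>
definition polar_avg :: "(real \<times> real) set \<Rightarrow> (real \<times> real \<Rightarrow> real) \<Rightarrow> real" where
  "polar_avg Q g = (LINT x:Q|lborel. fst x * g x) / (LINT x:Q|lborel. fst x)"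

text \<open>L^infinity norm on the unit disk (essential supremum; null sets of r dr dtheta on
  r > 0 coincide with Lebesgue null sets).\<close>
definition Linf_disk :: "(real \<times> real \<Rightarrow> real) \<Rightarrow> ereal" where
  "Linf_disk g = esssup (restrict_space lborel disk_polar) (\<lambda>x. ereal \<bar>g x\<bar>)"

end

theory Submission
  imports Defs
begin


lemma shift_period:
  fixes h :: "real \<Rightarrow> real"
  assumes hi: "\<And>d. d \<ge> 0 \<Longrightarrow> h integrable_on {0..d}"
    and hp: "\<And>y. y \<ge> 0 \<Longrightarrow> h (y + 2*pi) = h y"
    and c: "c \<ge> 0"
  shows "integral {0..c+2*pi} h = integral {0..2*pi} h + integral {0..c} h"
proof -
  have "integral {0..c+2*pi} h = integral {0..2*pi} h + integral {2*pi..c+2*pi} h"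
    using Henstock_Kurzweil_Integration.integral_combine[where a=0 and c="2*pi" and b="c+2*pi" and f=h] hi[of "c+2*pi"] c by simp
  also have "integral {2*pi..c+2*pi} h = integral {2*pi-2*pi..c+2*pi-2*pi} (\<lambda>x. h (x + 2*pi))"
    by (rule integral_shift_real_ivl[symmetric])
  also have "\<dots> = integral {0..c} h"
    by (simp, intro integral_cong hp) auto
  finally show ?thesis .
qed

lemma bounded_meas_integrable_on:
  fixes g :: "real \<Rightarrow> real"
  assumes "g \<in> borel_measurable lborel" "\<And>y. \<bar>g y\<bar> \<le> L"
  shows "g integrable_on {c..d}"
proof -
  have "set_integrable lborel {c..d} g"
    unfolding set_integrable_def
    by (rule integrableI_bounded_set_indicator[where B=L]) (use assms in \<open>auto simp: emeasure_lborel_Icc_eq\<close>)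
  then show ?thesis by (rule set_borel_integral_eq_integral(1))
qed

locale core1 =
  fixes g :: "real \<Rightarrow> real" and L a b :: real
  assumes g_meas: "g \<in> borel_measurable lborel"
    and g_bnd: "\<And>y. \<bar>g y\<bar> \<le> L"
    and g_per: "\<And>y. g (y + 2*pi) = g y"
    and g_mean: "integral {0..2*pi} g = 0"
    and a0: "0 \<le> a" and ab: "a \<le> b"
begin

definition F where "F x = integral {0..x} g"
definition G where "G s = F (b+s) - F (a+s)"
definition H where "H s = integral {0..s} G"

lemma L0: "0 \<le> L" using g_bnd[of 0] by linarith

lemma b0: "0 \<le> b" using a0 ab by linarith

lemma g_int: "g integrable_on {c..d}"
  by (rule bounded_meas_integrable_on[OF g_meas g_bnd])

lemma F_cont: "continuous_on {0..X} F"
  unfolding F_def[abs_def] by (rule indefinite_integral_continuous_1[OF g_int])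

lemma F_per: "x \<ge> 0 \<Longrightarrow> F (x + 2*pi) = F x"
  unfolding F_def using shift_period[of g x] g_int g_per g_mean by simp

lemma F_diff: "0 \<le> u \<Longrightarrow> u \<le> v \<Longrightarrow> F v - F u = integral {u..v} g"
  unfolding F_def
  using Henstock_Kurzweil_Integration.integral_combine[where a=0 and c=u and b=v and f=g] g_int
  by simp

lemma int_bound:
  fixes h :: "real \<Rightarrow> real"
  assumes "h integrable_on {u..v}" "u \<le> v" "\<And>x. x \<in> {u..v} \<Longrightarrow> \<bar>h x\<bar> \<le> K" "0 \<le> K"
  shows "\<bar>integral {u..v} h\<bar> \<le> K * (v - u)"
proof -
  have "norm (integral (cbox u v) h) \<le> K * Henstock_Kurzweil_Integration.content (cbox u v)"
    by (rule has_integral_bound[where f=h]) (use assms in auto)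
  then show ?thesis using assms by (simp add: content_real)
qed

lemma G_bnd: "s \<ge> 0 \<Longrightarrow> \<bar>G s\<bar> \<le> (b - a) * L"
proof -
  assume s: "s \<ge> 0"
  have "G s = integral {a+s..b+s} g" unfolding G_def using s a0 ab by (intro F_diff) auto
  also have "\<bar>\<dots>\<bar> \<le> L * ((b+s) - (a+s))"
    by (rule int_bound) (use g_int g_bnd ab L0 in auto)
  finally show ?thesis by (simp add: mult.commute)
qed

lemma G_cont: "continuous_on {0..X} G"
proof -
  have c1: "continuous_on {0..X} (\<lambda>s. F (b+s))"
    by (rule continuous_on_compose2[OF F_cont[of "b+X"]]) (auto intro!: continuous_intros simp: a0 ab b0)
  have c2: "continuous_on {0..X} (\<lambda>s. F (a+s))"
    by (rule continuous_on_compose2[OF F_cont[of "a+X"]]) (auto intro!: continuous_intros simp: a0 ab b0)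
  show ?thesis unfolding G_def[abs_def] by (intro continuous_on_diff c1 c2)
qed

lemma G_int: "G integrable_on {0..X}"
  by (rule integrable_continuous_real[OF G_cont])

lemma G_per: "s \<ge> 0 \<Longrightarrow> G (s + 2*pi) = G s"
  unfolding G_def using F_per[of "b+s"] F_per[of "a+s"] a0 ab by (simp add: add.assoc)

lemma F_int: "F integrable_on {0..X}"
  by (rule integrable_continuous_real[OF F_cont])

lemma F_shift_int: "c \<ge> 0 \<Longrightarrow> integral {0..2*pi} (\<lambda>s. F (c+s)) = integral {0..2*pi} F"
proof -
  assume c: "c \<ge> 0"
  have "integral {0..2*pi} (\<lambda>s. F (c+s)) = integral {c-c..c+2*pi-c} (\<lambda>s. F (s+c))"
    by (simp add: add.commute)
  also have "\<dots> = integral {c..c+2*pi} F" by (rule integral_shift_real_ivl)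
  also have "\<dots> = integral {0..c+2*pi} F - integral {0..c} F"
    using Henstock_Kurzweil_Integration.integral_combine[where a=0 and c=c and b="c+2*pi" and f=F] F_int c
    by simp
  also have "\<dots> = integral {0..2*pi} F"
    using shift_period[of F c] F_int F_per c by simp
  finally show ?thesis .
qed

lemma G_mean: "integral {0..2*pi} G = 0"
proof -
  have i1: "(\<lambda>s. F (b+s)) integrable_on {0..2*pi}"
    by (rule integrable_continuous_real, rule continuous_on_compose2[OF F_cont[of "b+2*pi"]])
       (auto intro!: continuous_intros simp: a0 ab b0)
  have i2: "(\<lambda>s. F (a+s)) integrable_on {0..2*pi}"
    by (rule integrable_continuous_real, rule continuous_on_compose2[OF F_cont[of "a+2*pi"]])
       (auto intro!: continuous_intros simp: a0 ab b0)
  have "integral {0..2*pi} G = integral {0..2*pi} (\<lambda>s. F (b+s)) - integral {0..2*pi} (\<lambda>s. F (a+s))"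
    unfolding G_def[abs_def] by (rule integral_diff[OF i1 i2])
  also have "\<dots> = 0" using F_shift_int[of a] F_shift_int[of b] a0 ab by simp
  finally show ?thesis .
qed

lemma H_per: "s \<ge> 0 \<Longrightarrow> H (s + 2*pi) = H s"
  unfolding H_def using shift_period[of G s] G_int G_per G_mean by simp

lemma H_bnd0: "0 \<le> s \<Longrightarrow> s \<le> 2*pi \<Longrightarrow> \<bar>H s\<bar> \<le> 2*pi*((b-a)*L)"
proof -
  assume s: "0 \<le> s" "s \<le> 2*pi"
  have "\<bar>H s\<bar> \<le> ((b-a)*L) * (s - 0)"
    unfolding H_def by (rule int_bound) (use G_int G_bnd s ab L0 in auto)
  also have "\<dots> \<le> ((b-a)*L) * (2*pi)" using s ab L0 by (intro mult_left_mono) auto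
  finally show ?thesis by (simp add: mult.commute)
qed

lemma H_bnd_n: "\<forall>s. 0 \<le> s \<and> s \<le> 2*pi*(real n + 1) \<longrightarrow> \<bar>H s\<bar> \<le> 2*pi*((b-a)*L)"
proof (induction n)
  case 0 then show ?case using H_bnd0 by auto
next
  case (Suc n)
  show ?case
  proof (intro allI impI)
    fix s assume s: "0 \<le> s \<and> s \<le> 2*pi*(real (Suc n) + 1)"
    show "\<bar>H s\<bar> \<le> 2*pi*((b-a)*L)"
    proof (cases "s \<le> 2*pi")
      case True then show ?thesis using H_bnd0 s by auto
    next
      case False
      then have "H s = H (s - 2*pi)" using H_per[of "s - 2*pi"] by simp
      moreover have "0 \<le> s - 2*pi \<and> s - 2*pi \<le> 2*pi*(real n + 1)"
        using s False by (auto simp: algebra_simps)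
      ultimately show ?thesis using Suc.IH by auto
    qed
  qed
qed

lemma H_bnd: "0 \<le> s \<Longrightarrow> \<bar>H s\<bar> \<le> 2*pi*((b-a)*L)"
proof -
  assume s: "0 \<le> s"
  obtain n :: nat where "s / (2*pi) \<le> real n" using real_arch_simple by blast
  then have "s \<le> 2*pi*(real n + 1)" using pi_gt_zero by (simp add: divide_le_eq algebra_simps) (smt (verit) pi_gt_zero)
  then show ?thesis using H_bnd_n[of n] s by auto
qed

lemma H_cont: "continuous_on {0..X} H"
  unfolding H_def[abs_def] by (rule indefinite_integral_continuous_1[OF G_int])

lemma ibp_bound:
  assumes u: "0 \<le> u0" "u0 \<le> u1"
  shows "\<bar>integral {u0..u1} (\<lambda>u. u * G u)\<bar> \<le> 2 * u1 * (2*pi*((b-a)*L))"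
proof -
  let ?K = "2*pi*((b-a)*L)"
  have K0: "0 \<le> ?K" using ab L0 by auto
  have der: "((\<lambda>u. u * H u) has_vector_derivative (H x + x * G x)) (at x within {u0..u1})"
    if x: "x \<in> {u0..u1}" for x
  proof -
    have "(H has_vector_derivative G x) (at x within {0..u1})"
      unfolding H_def[abs_def] by (rule integral_has_vector_derivative[OF G_cont]) (use x u in auto)
    then have "(H has_vector_derivative G x) (at x within {u0..u1})"
      by (rule has_vector_derivative_within_subset) (use u in auto)
    then have dH: "(H has_real_derivative G x) (at x within {u0..u1})"
      by (simp add: has_real_derivative_iff_has_vector_derivative)
    have "((\<lambda>u. u * H u) has_real_derivative (H x + x * G x)) (at x within {u0..u1})"
      by (rule derivative_eq_intros dH | simp)+
    then show ?thesis by (simp add: has_real_derivative_iff_has_vector_derivative)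
  qed
  have ftc: "((\<lambda>x. H x + x * G x) has_integral (u1 * H u1 - u0 * H u0)) {u0..u1}"
    by (rule fundamental_theorem_of_calculus[OF u(2)]) (use der in auto)
  have Hc: "continuous_on {u0..u1} H"
    by (rule continuous_on_subset[OF H_cont[of u1]]) (use u in auto)
  have Gc: "continuous_on {u0..u1} G"
    by (rule continuous_on_subset[OF G_cont[of u1]]) (use u in auto)
  have iH: "H integrable_on {u0..u1}" by (rule integrable_continuous_real[OF Hc])
  have iG: "(\<lambda>u. u * G u) integrable_on {u0..u1}"
    by (rule integrable_continuous_real) (intro continuous_intros Gc)
  have "integral {u0..u1} (\<lambda>x. H x + x * G x) = integral {u0..u1} H + integral {u0..u1} (\<lambda>u. u * G u)"
    by (rule integral_add[OF iH iG])
  with ftc have eq: "integral {u0..u1} (\<lambda>u. u * G u) = u1 * H u1 - u0 * H u0 - integral {u0..u1} H"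
    by (simp add: integral_unique)
  have b1: "\<bar>u1 * H u1\<bar> \<le> u1 * ?K" using H_bnd[of u1] u by (simp add: abs_mult mult_left_mono)
  have b2: "\<bar>u0 * H u0\<bar> \<le> u0 * ?K" using H_bnd[of u0] u by (simp add: abs_mult mult_left_mono)
  have b3: "\<bar>integral {u0..u1} H\<bar> \<le> ?K * (u1 - u0)"
    by (rule int_bound[OF iH u(2) _ K0]) (use H_bnd u in auto)
  have "\<bar>integral {u0..u1} (\<lambda>u. u * G u)\<bar> \<le> u1 * ?K + u0 * ?K + ?K * (u1 - u0)"
    unfolding eq using b1 b2 b3 by arith
  also have "\<dots> = 2 * u1 * ?K" by (simp add: algebra_simps)
  finally show ?thesis .
qed

lemma core_bound:
  assumes t: "t > 0" and p: "0 \<le> p" "p \<le> q"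
  shows "\<bar>integral {p..q} (\<lambda>r. r * G (2*pi*t*r))\<bar> \<le> 2 * q * (b-a) * L / t"
proof -
  define m where "m = 2*pi*t"
  have m: "m > 0" unfolding m_def using t by simp
  have img: "(\<lambda>x. x / m) ` {m*p..m*q} = {p..q}"
  proof -
    have "(\<lambda>x. x / m) ` {m*p..m*q} = {m*p/m..m*q/m}"
      using m by (intro image_divide_atLeastAtMost) auto
    then show ?thesis using m by simp
  qed
  have "integral {p..q} (\<lambda>r. r * G (2*pi*t*r)) = integral {p..q} (\<lambda>r. (1/m) * ((m * r) * G (m * r)))"
    using m t by (intro integral_cong) (simp add: m_def)
  also have "\<dots> = (1/m) * integral ((\<lambda>x. x / m) ` {m*p..m*q}) (\<lambda>r. (m * r) * G (m * r))"
    by (simp only: img integral_mult_right)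
  also have "\<dots> = (1/m) * ((1/m) * integral {m*p..m*q} (\<lambda>u. u * G u))"
    using integral_stretch_real[where m=m and f="\<lambda>u. u * G u" and a="m*p" and b="m*q"] m by simp
  finally have eq: "integral {p..q} (\<lambda>r. r * G (2*pi*t*r)) = integral {m*p..m*q} (\<lambda>u. u * G u) / (m*m)"
    by simp
  have "\<bar>integral {m*p..m*q} (\<lambda>u. u * G u)\<bar> \<le> 2 * (m*q) * (2*pi*((b-a)*L))"
    by (rule ibp_bound) (use m p in auto)
  then have "\<bar>integral {p..q} (\<lambda>r. r * G (2*pi*t*r))\<bar> \<le> 2 * (m*q) * (2*pi*((b-a)*L)) / (m*m)"
    unfolding eq abs_divide abs_mult abs_of_pos[OF m] using m by (intro divide_right_mono) auto
  also have "\<dots> = 2 * q * (b-a) * L / t"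
    using m t unfolding m_def by (simp add: field_simps)
  finally show ?thesis .
qed

end



lemma AE_translate:
  fixes P :: "real \<Rightarrow> bool"
  assumes [measurable]: "Measurable.pred borel P" and ae: "AE x in lborel. P x"
  shows "AE x in lborel. P (x + d)"
proof -
  have "AE x in distr lborel borel ((+) d). P x" by (subst lborel_distr_plus) (rule ae)
  then show ?thesis by (subst (asm) AE_distr_iff) (auto simp: add.commute)
qed

lemma AE_exists_in_Ioo:
  assumes ae: "AE x in lborel. R x" and pq: "(p::real) < q"
  shows "\<exists>x\<in>{p<..<q}. R x"
proof (rule ccontr)
  assume nex: "\<not> (\<exists>x\<in>{p<..<q}. R x)"
  from ae obtain Z where Z0: "{x \<in> space lborel. \<not> R x} \<subseteq> Z" "emeasure lborel Z = 0" "Z \<in> sets lborel"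
    by (rule AE_E)
  then have Z: "Z \<in> null_sets lborel" "{x \<in> space lborel. \<not> R x} \<subseteq> Z" by auto
  have "{p<..<q} \<subseteq> Z" using Z(2) nex by auto
  then have "emeasure lborel {p<..<q} \<le> emeasure lborel Z"
    using Z(1) by (intro emeasure_mono) auto
  then show False using Z(1) pq by (simp add: null_setsD1)
qed

lemma periodic_nat:
  fixes g :: "real \<Rightarrow> 'b"
  assumes "\<And>y. g (y + 2*pi) = g y"
  shows "g (y + 2*pi*real n) = g y"
proof (induction n)
  case (Suc n)
  have "g (y + 2*pi*real (Suc n)) = g ((y + 2*pi*real n) + 2*pi)" by (simp add: algebra_simps)
  also have "\<dots> = g (y + 2*pi*real n)" by (rule assms)
  also have "\<dots> = g y" by (rule Suc)
  finally show ?case .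
qed simp

lemma periodic_int:
  fixes g :: "real \<Rightarrow> 'b"
  assumes "\<And>y. g (y + 2*pi) = g y"
  shows "g (y + 2*pi*real_of_int k) = g y"
proof (cases "k \<ge> 0")
  case True
  then have "real_of_int k = real (nat k)" by simp
  then show ?thesis using periodic_nat[where g=g, OF assms, of y "nat k"] by (simp only:)
next
  case False
  then have k: "real_of_int k = - real (nat (-k))" by simp
  have e: "(y + 2*pi*real_of_int k) + 2*pi*real (nat (-k)) = y" by (simp add: k)
  have "g y = g ((y + 2*pi*real_of_int k) + 2*pi*real (nat (-k)))"
    by (simp only: e)
  also have "\<dots> = g (y + 2*pi*real_of_int k)" by (rule periodic_nat[where g=g, OF assms])
  finally show ?thesis by simp
qed

lemma per_AE:
  fixes g :: "real \<Rightarrow> real" and B :: ereal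
  assumes [measurable]: "g \<in> borel_measurable borel"
    and per: "\<And>y. g (y + 2*pi) = g y"
    and ae: "AE \<theta> in lborel. \<theta> \<in> {0<..2*pi} \<longrightarrow> ereal \<bar>g (\<theta> + c)\<bar> \<le> B"
  shows "AE \<theta> in lborel. ereal \<bar>g \<theta>\<bar> \<le> B"
proof -
  have mp: "Measurable.pred borel (\<lambda>\<theta>. \<theta> \<in> {0<..2*pi} \<longrightarrow> ereal \<bar>g (\<theta> + c)\<bar> \<le> B)"
    by measurable
  have ae1: "AE \<theta> in lborel. \<theta> - c \<in> {0<..2*pi} \<longrightarrow> ereal \<bar>g \<theta>\<bar> \<le> B"
    using AE_translate[OF mp ae, of "-c"] by (simp only: diff_conv_add_uminus add.assoc add.left_inverse add_0_right)
  have "AE \<theta> in lborel. \<theta> - 2*pi*real_of_int k - c \<in> {0<..2*pi} \<longrightarrow> ereal \<bar>g \<theta>\<bar> \<le> B" for k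
  proof -
    have A: "AE \<theta> in lborel. (\<theta> + (- 2*pi*real_of_int k)) - c \<in> {0<..2*pi} \<longrightarrow> ereal \<bar>g (\<theta> + (- 2*pi*real_of_int k))\<bar> \<le> B"
      by (rule AE_translate[OF _ ae1]) measurable
    have e1: "g (\<theta> + (- 2*pi*real_of_int k)) = g \<theta>" for \<theta>
      using periodic_int[where g=g, OF per, of "\<theta> + (- 2*pi*real_of_int k)" k] by simp
    have e2: "(\<theta> + (- 2*pi*real_of_int k)) - c = \<theta> - 2*pi*real_of_int k - c" for \<theta> by simp
    show ?thesis using A by (simp only: e1 e2)
  qed
  then have "AE \<theta> in lborel. \<forall>k::int. \<theta> - 2*pi*real_of_int k - c \<in> {0<..2*pi} \<longrightarrow> ereal \<bar>g \<theta>\<bar> \<le> B"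
    by (subst AE_all_countable) blast
  then show ?thesis
  proof (rule AE_mp[OF _ AE_I2], intro impI)
    fix \<theta> assume H: "\<forall>k::int. \<theta> - 2*pi*real_of_int k - c \<in> {0<..2*pi} \<longrightarrow> ereal \<bar>g \<theta>\<bar> \<le> B"
    define x where "x = (\<theta> - c) / (2*pi)"
    define k where "k = \<lceil>x\<rceil> - 1"
    have "x - real_of_int k > 0" "x - real_of_int k \<le> 1"
      unfolding k_def by linarith+
    moreover have "\<theta> - 2*pi*real_of_int k - c = 2*pi*(x - real_of_int k)"
      unfolding x_def by (simp add: field_simps)
    ultimately have "\<theta> - 2*pi*real_of_int k - c \<in> {0<..2*pi}" by simp
    then show "ereal \<bar>g \<theta>\<bar> \<le> B" using H by blast
  qed
qed



lemma rho0_annulus: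
  assumes l: "l < 2^N" and r: "r \<in> {real l / 2^N <.. (real l + 1) / 2^N}"
  shows "rho0 N f r \<theta> = f l \<theta>"
proof -
  have z: "indicator {real l' / 2^N <.. (real l' + 1) / 2^N} r = (0::real)"
    if "l' \<noteq> l" for l'
  proof (cases "l' < l")
    case True
    then have "real l' + 1 \<le> real l" by linarith
    then have "(real l' + 1) / 2^N \<le> real l / 2^N" by (simp add: divide_right_mono)
    then show ?thesis using r by (auto simp: indicator_def)
  next
    case False
    then have "real l + 1 \<le> real l'" using that by linarith
    then have "(real l + 1) / 2^N \<le> real l' / 2^N" by (simp add: divide_right_mono)
    then show ?thesis using r by (auto simp: indicator_def)
  qed
  have "rho0 N f r \<theta> = indicator {real l / 2^N <.. (real l + 1) / 2^N} r * f l \<theta>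
      + (\<Sum>l'\<in>{..<2^N} - {l}. indicator {real l' / 2^N <.. (real l' + 1) / 2^N} r * f l' \<theta>)"
    unfolding rho0_def using l by (subst sum.remove[of _ l]) auto
  also have "(\<Sum>l'\<in>{..<2^N} - {l}. indicator {real l' / 2^N <.. (real l' + 1) / 2^N} r * f l' \<theta>) = 0"
    by (rule sum.neutral) (auto simp: z)
  finally show ?thesis using r by simp
qed

lemma rho_meas[measurable]:
  assumes [measurable]: "\<And>l. f l \<in> borel_measurable borel"
  shows "rho N f t \<in> borel_measurable (lborel \<Otimes>\<^sub>M lborel)"
  unfolding rho_def[abs_def] rho0_def by measurable

lemma disk_sets: "disk_polar \<in> sets (lborel \<Otimes>\<^sub>M lborel)"
  unfolding disk_polar_def by (intro pair_measureI) (auto simp: greaterThanAtMost_borel)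

lemma disk_sets2: "disk_polar \<in> sets (lborel :: (real \<times> real) measure)"
  using disk_sets by (simp only: lborel_prod)

lemma Qcell_sets: "Qcell M i j \<in> sets (lborel \<Otimes>\<^sub>M lborel)"
  unfolding Qcell_def by (intro pair_measureI) (auto simp: greaterThanAtMost_borel)

locale msetup =
  fixes N :: nat and f :: "nat \<Rightarrow> real \<Rightarrow> real" and t :: real
  assumes fmeas[measurable]: "\<And>l. f l \<in> borel_measurable borel"
    and fper: "\<And>l \<theta>. f l (\<theta> + 2*pi) = f l \<theta>"
    and fmean: "\<And>l. (LINT \<theta>:{0..2*pi}|lborel. f l \<theta>) = 0"
    and t: "t > 0"
begin

lemma Linf_AE:
  assumes l: "l < 2^N"
  shows "AE \<theta> in lborel. ereal \<bar>f l \<theta>\<bar> \<le> Linf_disk (rho N f t)"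
proof -
  let ?L = "Linf_disk (rho N f t)"
  have "AE x in restrict_space lborel disk_polar. ereal \<bar>rho N f t x\<bar> \<le> ?L"
    unfolding Linf_disk_def by (rule esssup_AE)
  then have "AE x in lborel. x \<in> disk_polar \<longrightarrow> ereal \<bar>rho N f t x\<bar> \<le> ?L"
    by (subst (asm) AE_restrict_space_iff) (use disk_sets2 in auto)
  then have "AE x in lborel \<Otimes>\<^sub>M lborel. (fst x, snd x) \<in> disk_polar \<longrightarrow> ereal \<bar>rho N f t (fst x, snd x)\<bar> \<le> ?L"
    by (simp only: lborel_prod prod.collapse)
  then have "AE r in lborel. AE \<theta> in lborel. (r, \<theta>) \<in> disk_polar \<longrightarrow> ereal \<bar>rho N f t (r, \<theta>)\<bar> \<le> ?L"
    by (subst lborel_pair.AE_pair_iff) (use disk_sets in measurable)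
  note aeall = this
  have pq: "real l / 2^N < (real l + 1) / 2^N" by (simp add: divide_strict_right_mono)
  from AE_exists_in_Ioo[OF aeall pq] obtain r where r: "r \<in> {real l / 2^N <..< (real l + 1) / 2^N}"
    and aer: "AE \<theta> in lborel. (r, \<theta>) \<in> disk_polar \<longrightarrow> ereal \<bar>rho N f t (r, \<theta>)\<bar> \<le> ?L"
    by blast
  have r1: "r \<le> 1"
  proof -
    have "l + 1 \<le> (2::nat)^N" using l by simp
    then have "real (l + 1) \<le> real ((2::nat)^N)" by (simp only: of_nat_le_iff)
    then have "real l + 1 \<le> 2^N" by simp
    then have A: "(real l + 1) / 2^N \<le> 1" by simp
    have B: "r < (real l + 1) / 2^N" using r by simp
    from A B show ?thesis by linarith
  qed
  have A0: "0 \<le> real l / 2^N" by simp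
  have B0: "real l / 2^N < r" using r by simp
  from A0 B0 have r0: "0 < r" by linarith
  have "AE \<theta> in lborel. \<theta> \<in> {0<..2*pi} \<longrightarrow> ereal \<bar>f l (\<theta> + 2*pi*t*r)\<bar> \<le> ?L"
  proof (rule AE_mp[OF aer AE_I2], intro impI)
    fix \<theta> assume H: "(r, \<theta>) \<in> disk_polar \<longrightarrow> ereal \<bar>rho N f t (r, \<theta>)\<bar> \<le> ?L"
      and th: "\<theta> \<in> {0<..2*pi}"
    have "(r, \<theta>) \<in> disk_polar" using r0 r1 th unfolding disk_polar_def by auto
    moreover have "rho N f t (r, \<theta>) = f l (\<theta> + 2*pi*t*r)"
      unfolding rho_def using rho0_annulus[OF l, of r] r by simp
    ultimately show "ereal \<bar>f l (\<theta> + 2*pi*t*r)\<bar> \<le> ?L" using H by simp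
  qed
  then show ?thesis by (rule per_AE[OF fmeas fper])
qed

context
  fixes L :: real
  assumes Lfin: "Linf_disk (rho N f t) = ereal L"
begin

lemma fL: "l < 2^N \<Longrightarrow> AE \<theta> in lborel. \<bar>f l \<theta>\<bar> \<le> L"
  using Linf_AE[of l] by (simp add: Lfin)

lemma L0: "0 \<le> L"
proof -
  have "AE \<theta> in lborel. \<bar>f 0 \<theta>\<bar> \<le> L" by (rule fL) simp
  from AE_exists_in_Ioo[OF this, of 0 1] obtain \<theta> where "\<bar>f 0 \<theta>\<bar> \<le> L" by auto
  then show ?thesis by linarith
qed

definition fp :: "nat \<Rightarrow> real \<Rightarrow> real" where
  "fp l \<theta> = (if \<bar>f l \<theta>\<bar> \<le> L then f l \<theta> else 0)"

lemma fp_meas[measurable]: "fp l \<in> borel_measurable borel"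
  unfolding fp_def[abs_def] by measurable

lemma fp_bnd: "\<bar>fp l \<theta>\<bar> \<le> L"
  unfolding fp_def using L0 by auto

lemma fp_per: "fp l (\<theta> + 2*pi) = fp l \<theta>"
  unfolding fp_def using fper by simp

lemma fp_AE: "l < 2^N \<Longrightarrow> AE \<theta> in lborel. f l \<theta> = fp l \<theta>"
  by (rule AE_mp[OF fL AE_I2]) (auto simp: fp_def)

lemma fp_AE_all: "AE \<theta> in lborel. \<forall>l<2^N. f l \<theta> = fp l \<theta>"
proof -
  have "AE \<theta> in lborel. \<forall>l. l < 2^N \<longrightarrow> f l \<theta> = fp l \<theta>"
    by (subst AE_all_countable) (auto intro: fp_AE)
  then show ?thesis by simp
qed

lemma set_integrable_bnd:
  fixes g :: "real \<Rightarrow> real"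
  assumes [measurable]: "g \<in> borel_measurable borel" and "\<And>x. x \<in> {c..d} \<Longrightarrow> \<bar>g x\<bar> \<le> K"
  shows "set_integrable lborel {c..d} g"
  unfolding set_integrable_def
  by (rule integrableI_bounded_set_indicator[where B=K]) (use assms in \<open>auto simp: emeasure_lborel_Icc_eq\<close>)

lemma fp_mean: "l < 2^N \<Longrightarrow> integral {0..2*pi} (fp l) = 0"
proof -
  assume l: "l < 2^N"
  have si: "set_integrable lborel {0..2*pi} (fp l)"
    by (rule set_integrable_bnd[where K=L]) (auto simp: fp_bnd)
  have "integral {0..2*pi} (fp l) = (LINT \<theta>:{0..2*pi}|lborel. fp l \<theta>)"
    by (rule set_borel_integral_eq_integral(2)[OF si, symmetric])
  also have "\<dots> = (LINT \<theta>:{0..2*pi}|lborel. f l \<theta>)"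
    unfolding set_lebesgue_integral_def
    by (rule integral_cong_AE) (use fp_AE[OF l] in auto)
  also have "\<dots> = 0" by (rule fmean)
  finally show ?thesis .
qed

lemma fp_core1: "l < 2^N \<Longrightarrow> 0 \<le> a \<Longrightarrow> a \<le> b \<Longrightarrow> core1 (fp l) L a b"
  by unfold_locales (auto simp: fp_bnd fp_per fp_mean)

lemma rho_AE: "AE x in lborel. rho N f t x = rho N fp t x"
proof -
  have "AE r in lborel. AE \<theta> in lborel. rho N f t (r, \<theta>) = rho N fp t (r, \<theta>)"
  proof (rule AE_I2)
    fix r :: real
    have "AE \<theta> in lborel. \<forall>l<2^N. f l (\<theta> + 2*pi*t*r) = fp l (\<theta> + 2*pi*t*r)"
      by (rule AE_translate[OF _ fp_AE_all]) measurable
    then show "AE \<theta> in lborel. rho N f t (r, \<theta>) = rho N fp t (r, \<theta>)"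
      by (rule AE_mp[OF _ AE_I2]) (auto simp: rho_def rho0_def intro!: sum.cong)
  qed
  then have "AE x in lborel \<Otimes>\<^sub>M lborel. rho N f t (fst x, snd x) = rho N fp t (fst x, snd x)"
    by (subst (asm) lborel_pair.AE_pair_iff) measurable
  then show ?thesis by (simp only: lborel_prod prod.collapse)
qed


definition GG :: "nat \<Rightarrow> real \<Rightarrow> real \<Rightarrow> real \<Rightarrow> real" where
  "GG l a b s = integral {0..b+s} (fp l) - integral {0..a+s} (fp l)"

lemma Ioc_Icc_AE: "AE x in lborel. (x \<in> {c<..d}) = (x \<in> {c..(d::real)})"
  by (rule AE_mp[OF AE_lborel_singleton[of c] AE_I2]) auto

lemma Ioc_Icc_AE': "AE x in lborel. (c < x \<and> x \<le> d) = (c \<le> x \<and> x \<le> (d::real))"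
  using Ioc_Icc_AE[of c d] by simp

definition Gt :: "nat \<Rightarrow> real \<Rightarrow> real \<Rightarrow> real \<Rightarrow> real" where
  "Gt l a b r = (\<integral>\<theta>. indicator {a<..b} \<theta> * fp l (\<theta> + 2*pi*t*r) \<partial>lborel)"

lemma Gt_meas[measurable]: "Gt l a b \<in> borel_measurable borel"
  unfolding Gt_def[abs_def] by measurable

lemma Gt_eq:
  assumes a: "0 \<le> a" "a \<le> b" and s: "0 \<le> s"
  shows "(\<integral>\<theta>. indicator {a<..b} \<theta> * fp l (\<theta> + s) \<partial>lborel) = GG l a b s"
proof -
  have "(\<integral>\<theta>. indicator {a<..b} \<theta> * fp l (\<theta> + s) \<partial>lborel) = (LINT \<theta>:{a<..b}|lborel. fp l (\<theta> + s))"
    by (simp add: set_lebesgue_integral_def)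
  also have "\<dots> = (LINT \<theta>:{a..b}|lborel. fp l (\<theta> + s))"
    by (rule set_integral_cong_set[symmetric]) (auto simp: set_borel_measurable_def intro: Ioc_Icc_AE')
  also have "\<dots> = integral {a..b} (\<lambda>\<theta>. fp l (\<theta> + s))"
    by (rule set_borel_integral_eq_integral(2), rule set_integrable_bnd[where K=L]) (auto simp: fp_bnd)
  also have "\<dots> = integral {(a+s)-s..(b+s)-s} (\<lambda>\<theta>. fp l (\<theta> + s))" by simp
  also have "\<dots> = integral {a+s..b+s} (fp l)" by (rule integral_shift_real_ivl)
  also have "\<dots> = GG l a b s"
    unfolding GG_def
    using Henstock_Kurzweil_Integration.integral_combine[where a=0 and c="a+s" and b="b+s" and f="fp l"]
      bounded_meas_integrable_on[of "fp l" L 0 "b+s"] fp_bnd a s by simp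
  finally show ?thesis .
qed

lemma GG_bnd: "0 \<le> a \<Longrightarrow> a \<le> b \<Longrightarrow> l < 2^N \<Longrightarrow> 0 \<le> s \<Longrightarrow> \<bar>GG l a b s\<bar> \<le> (b - a) * L"
proof -
  assume a: "0 \<le> a" "a \<le> b" and l: "l < 2^N" and s: "0 \<le> s"
  interpret C: core1 "fp l" L a b by (rule fp_core1) (use a l in auto)
  have "C.G s = GG l a b s" by (simp add: C.G_def C.F_def GG_def)
  then show ?thesis using C.G_bnd[OF s] by simp
qed

lemma J_bound:
  assumes a: "0 \<le> a" "a \<le> b" and l: "l < 2^N" and p: "0 \<le> p" "p \<le> q"
  shows "\<bar>\<integral>r. indicator {p<..q} r * (r * Gt l a b r) \<partial>lborel\<bar> \<le> 2 * q * (b-a) * L / t"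
proof -
  interpret C: core1 "fp l" L a b by (rule fp_core1) (use a l in auto)
  have GG: "GG l a b s = C.G s" for s by (simp add: C.G_def C.F_def GG_def)
  have Gt: "Gt l a b r = C.G (2*pi*t*r)" if "0 \<le> r" for r
    unfolding Gt_def using Gt_eq[OF a, of "2*pi*t*r" l] t that by (simp add: GG)
  have meas: "(\<lambda>r. r * Gt l a b r) \<in> borel_measurable borel" by measurable
  have "(\<integral>r. indicator {p<..q} r * (r * Gt l a b r) \<partial>lborel) = (LINT r:{p<..q}|lborel. r * Gt l a b r)"
    by (simp add: set_lebesgue_integral_def)
  also have "\<dots> = (LINT r:{p..q}|lborel. r * Gt l a b r)"
    by (rule set_integral_cong_set[symmetric]) (auto simp: set_borel_measurable_def meas intro: Ioc_Icc_AE')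
  also have "\<dots> = integral {p..q} (\<lambda>r. r * Gt l a b r)"
  proof (rule set_borel_integral_eq_integral(2), rule set_integrable_bnd[where K="q * ((b-a) * L)"])
    show "(\<lambda>r. r * Gt l a b r) \<in> borel_measurable borel" by (rule meas)
    fix x assume x: "x \<in> {p..q}"
    have "\<bar>Gt l a b x\<bar> \<le> (b-a) * L" using C.G_bnd[of "2*pi*t*x"] Gt[of x] x p t by simp
    then show "\<bar>x * Gt l a b x\<bar> \<le> q * ((b-a) * L)"
      using x p by (simp add: abs_mult mult_mono)
  qed
  also have "\<dots> = integral {p..q} (\<lambda>r. r * C.G (2*pi*t*r))"
    by (rule integral_cong) (use Gt p in auto)
  finally show ?thesis using C.core_bound[OF t p] by simp
qed


lemma rho_bnd: "\<bar>rho N fp t x\<bar> \<le> 2^N * L"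
proof -
  have "\<bar>rho N fp t x\<bar> \<le> (\<Sum>l<(2::nat)^N. \<bar>indicator {real l / 2^N <.. (real l + 1) / 2^N} (fst x) * fp l (snd x + 2*pi*t*fst x)\<bar>)"
    unfolding rho_def rho0_def by (rule sum_abs)
  also have "\<dots> \<le> (\<Sum>l<(2::nat)^N. L)"
  proof (rule sum_mono)
    fix l
    show "\<bar>indicator {real l / 2^N <.. (real l + 1) / 2^N} (fst x) * fp l (snd x + 2*pi*t*fst x)\<bar> \<le> L"
      using fp_bnd[of l "snd x + 2*pi*t*fst x"] L0 by (auto simp: indicator_def)
  qed
  also have "\<dots> = 2^N * L" by simp
  finally show ?thesis .
qed

lemma Gt_bnd: "0 \<le> a \<Longrightarrow> a \<le> b \<Longrightarrow> l < 2^N \<Longrightarrow> 0 \<le> r \<Longrightarrow> \<bar>Gt l a b r\<bar> \<le> (b - a) * L"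
  unfolding Gt_def using Gt_eq[of a b "2*pi*t*r" l] GG_bnd[of a b l "2*pi*t*r"] t by simp

lemma num_eq:
  assumes a: "0 \<le> a" "a \<le> b" and r: "0 \<le> r0" "r0 \<le> r1"
  shows "(LINT x:({r0<..r1} \<times> {a<..b})|lborel. fst x * rho N f t x)
    = (\<Sum>l<2^N. \<integral>r. indicator {r0<..r1} r * indicator {real l / 2^N <.. (real l + 1) / 2^N} r * (r * Gt l a b r) \<partial>lborel)"
proof -
  let ?Q = "{r0<..r1} \<times> {a<..b}"
  let ?I = "\<lambda>l::nat. {real l / 2^N <.. (real l + 1) / 2^N}"
  have Qs: "?Q \<in> sets (lborel \<Otimes>\<^sub>M lborel)" by (intro pair_measureI) (auto simp: greaterThanAtMost_borel)
  have "(LINT x:?Q|lborel. fst x * rho N f t x) = (LINT x:?Q|(lborel \<Otimes>\<^sub>M lborel). fst x * rho N f t x)"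
    by (simp only: lborel_prod)
  also have "\<dots> = (LINT x:?Q|(lborel \<Otimes>\<^sub>M lborel). fst x * rho N fp t x)"
    unfolding set_lebesgue_integral_def
  proof (rule integral_cong_AE)
    show "(\<lambda>x. indicator ?Q x *\<^sub>R (fst x * rho N f t x)) \<in> borel_measurable (lborel \<Otimes>\<^sub>M lborel)"
      using Qs by measurable
    show "(\<lambda>x. indicator ?Q x *\<^sub>R (fst x * rho N fp t x)) \<in> borel_measurable (lborel \<Otimes>\<^sub>M lborel)"
      using Qs by measurable
    have "AE x in lborel \<Otimes>\<^sub>M lborel. rho N f t x = rho N fp t x"
      using rho_AE by (simp only: lborel_prod)
    then show "AE x in lborel \<Otimes>\<^sub>M lborel. indicator ?Q x *\<^sub>R (fst x * rho N f t x) = indicator ?Q x *\<^sub>R (fst x * rho N fp t x)"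
      by (rule AE_mp[OF _ AE_I2]) auto
  qed
  also have "\<dots> = (\<integral>r. \<integral>\<theta>. indicator ?Q (r, \<theta>) *\<^sub>R (fst (r, \<theta>) * rho N fp t (r, \<theta>)) \<partial>lborel \<partial>lborel)"
    unfolding set_lebesgue_integral_def
  proof (rule lborel_pair.integral_fst'[symmetric], rule integrableI_bounded_set_indicator[where B="r1 * (2^N * L)"])
    show "?Q \<in> sets (lborel \<Otimes>\<^sub>M lborel)" by (rule Qs)
    show "(\<lambda>x. fst x * rho N fp t x) \<in> borel_measurable (lborel \<Otimes>\<^sub>M lborel)" by measurable
    show "emeasure (lborel \<Otimes>\<^sub>M lborel) ?Q < \<infinity>"
      using a r by (simp add: lborel.emeasure_pair_measure_Times ennreal_mult_less_top)
    show "AE x in lborel \<Otimes>\<^sub>M lborel. x \<in> ?Q \<longrightarrow> norm (fst x * rho N fp t x) \<le> r1 * (2^N * L)"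
    proof (rule AE_I2, intro impI)
      fix x assume x: "x \<in> ?Q"
      then have "0 \<le> fst x" "fst x \<le> r1" using r by auto
      then show "norm (fst x * rho N fp t x) \<le> r1 * (2^N * L)"
        using rho_bnd[of x] by (simp add: abs_mult mult_mono)
    qed
  qed
  also have "\<dots> = (\<integral>r. (\<Sum>l<2^N. (indicator {r0<..r1} r * indicator (?I l) r * r) * Gt l a b r) \<partial>lborel)"
  proof (rule Bochner_Integration.integral_cong[OF refl])
    fix r :: real
    have eq: "indicator ?Q (r, \<theta>) *\<^sub>R (fst (r, \<theta>) * rho N fp t (r, \<theta>))
        = (\<Sum>l<2^N. (indicator {r0<..r1} r * indicator (?I l) r * r) * (indicator {a<..b} \<theta> * fp l (\<theta> + 2*pi*t*r)))" for \<theta>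
      unfolding rho_def rho0_def indicator_times fst_conv snd_conv real_scaleR_def sum_distrib_left
      by (rule sum.cong[OF refl]) (simp only: mult_ac)
    have "(\<integral>\<theta>. indicator ?Q (r, \<theta>) *\<^sub>R (fst (r, \<theta>) * rho N fp t (r, \<theta>)) \<partial>lborel)
       = (\<integral>\<theta>. (\<Sum>l<2^N. (indicator {r0<..r1} r * indicator (?I l) r * r) * (indicator {a<..b} \<theta> * fp l (\<theta> + 2*pi*t*r))) \<partial>lborel)"
      by (simp only: eq)
    also have "\<dots> = (\<Sum>l<2^N. \<integral>\<theta>. (indicator {r0<..r1} r * indicator (?I l) r * r) * (indicator {a<..b} \<theta> * fp l (\<theta> + 2*pi*t*r)) \<partial>lborel)"
    proof (rule Bochner_Integration.integral_sum)
      fix l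
      have "integrable lborel (\<lambda>\<theta>. indicator {a<..b} \<theta> *\<^sub>R fp l (\<theta> + 2*pi*t*r))"
        by (rule integrableI_bounded_set_indicator[where B=L]) (use a in \<open>auto simp: fp_bnd\<close>)
      then show "integrable lborel (\<lambda>\<theta>. (indicator {r0<..r1} r * indicator (?I l) r * r) * (indicator {a<..b} \<theta> * fp l (\<theta> + 2*pi*t*r)))"
        by simp
    qed
    also have "\<dots> = (\<Sum>l<2^N. (indicator {r0<..r1} r * indicator (?I l) r * r) * Gt l a b r)"
      by (simp add: Gt_def)
    finally show "(\<integral>\<theta>. indicator ?Q (r, \<theta>) *\<^sub>R (fst (r, \<theta>) * rho N fp t (r, \<theta>)) \<partial>lborel)
       = (\<Sum>l<2^N. (indicator {r0<..r1} r * indicator (?I l) r * r) * Gt l a b r)" .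
  qed
  also have "\<dots> = (\<Sum>l<2^N. \<integral>r. (indicator {r0<..r1} r * indicator (?I l) r * r) * Gt l a b r \<partial>lborel)"
  proof (rule Bochner_Integration.integral_sum)
    fix l assume l: "l \<in> {..<(2::nat)^N}"
    have "integrable lborel (\<lambda>r. indicator {r0<..r1} r *\<^sub>R (indicator (?I l) r * r * Gt l a b r))"
    proof (rule integrableI_bounded_set_indicator[where B="r1 * ((b-a) * L)"])
      show "AE x in lborel. x \<in> {r0<..r1} \<longrightarrow> norm (indicator (?I l) x * x * Gt l a b x) \<le> r1 * ((b-a) * L)"
      proof (rule AE_I2, intro impI)
        fix x assume x: "x \<in> {r0<..r1}"
        have g: "\<bar>Gt l a b x\<bar> \<le> (b-a) * L" using Gt_bnd[OF a, of l x] l x r by auto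
        have h: "\<bar>indicator (?I l) x * x\<bar> \<le> r1" using x r by (auto simp: indicator_def)
        have "norm (indicator (?I l) x * x * Gt l a b x) = \<bar>indicator (?I l) x * x\<bar> * \<bar>Gt l a b x\<bar>"
          by (simp only: real_norm_def abs_mult)
        also have "\<dots> \<le> r1 * ((b-a) * L)" by (rule mult_mono[OF h g]) (use r in auto)
        finally show "norm (indicator (?I l) x * x * Gt l a b x) \<le> r1 * ((b-a) * L)" .
      qed
    qed (use r in auto)
    then show "integrable lborel (\<lambda>r. (indicator {r0<..r1} r * indicator (?I l) r * r) * Gt l a b r)"
      by (simp add: mult_ac)
  qed
  also have "\<dots> = (\<Sum>l<2^N. \<integral>r. indicator {r0<..r1} r * indicator (?I l) r * (r * Gt l a b r) \<partial>lborel)"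
    by (simp add: mult_ac)
  finally show ?thesis .
qed


lemma den_eq:
  fixes a b r0 r1 :: real
  assumes a: "a \<le> b" and r: "0 \<le> r0" "r0 \<le> r1"
  shows "(LINT x:({r0<..r1} \<times> {a<..b})|lborel. fst x) = (b - a) * ((r1^2 - r0^2) / 2)"
proof -
  let ?Q = "{r0<..r1} \<times> {a<..b}"
  have Qs: "?Q \<in> sets (lborel \<Otimes>\<^sub>M lborel)" by (intro pair_measureI) (auto simp: greaterThanAtMost_borel)
  have "(LINT x:?Q|lborel. fst x) = (LINT x:?Q|(lborel \<Otimes>\<^sub>M lborel). fst x)"
    by (simp only: lborel_prod)
  also have "\<dots> = (\<integral>r. \<integral>\<theta>. indicator ?Q (r, \<theta>) *\<^sub>R fst (r, \<theta>) \<partial>lborel \<partial>lborel)"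
    unfolding set_lebesgue_integral_def
  proof (rule lborel_pair.integral_fst'[symmetric], rule integrableI_bounded_set_indicator[where B="r1"])
    show "?Q \<in> sets (lborel \<Otimes>\<^sub>M lborel)" by (rule Qs)
    show "emeasure (lborel \<Otimes>\<^sub>M lborel) ?Q < \<infinity>"
      using a r by (subst lborel.emeasure_pair_measure_Times) (auto simp: ennreal_mult_less_top)
    show "AE x in lborel \<Otimes>\<^sub>M lborel. x \<in> ?Q \<longrightarrow> norm (fst x) \<le> r1"
      by (rule AE_I2) (use r in auto)
  qed simp
  also have "\<dots> = (\<integral>r. (b - a) * (indicator {r0<..r1} r * r) \<partial>lborel)"
  proof (rule Bochner_Integration.integral_cong[OF refl])
    fix r :: real
    have "(\<integral>\<theta>. indicator ?Q (r, \<theta>) *\<^sub>R fst (r, \<theta>) \<partial>lborel) = (\<integral>\<theta>. indicator {a<..b} \<theta> * (indicator {r0<..r1} r * r) \<partial>lborel)"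
      by (rule Bochner_Integration.integral_cong[OF refl]) (simp add: indicator_times)
    also have "\<dots> = measure lborel {a<..b} * (indicator {r0<..r1} r * r)"
      by simp
    also have "\<dots> = (b - a) * (indicator {r0<..r1} r * r)" using a by simp
    finally show "(\<integral>\<theta>. indicator ?Q (r, \<theta>) *\<^sub>R fst (r, \<theta>) \<partial>lborel) = (b - a) * (indicator {r0<..r1} r * r)" .
  qed
  also have "\<dots> = (b - a) * (LINT r:{r0<..r1}|lborel. r)"
    by (simp add: set_lebesgue_integral_def)
  also have "(LINT r:{r0<..r1}|lborel. r) = (LINT r:{r0..r1}|lborel. r)"
    by (rule set_integral_cong_set[symmetric]) (auto simp: set_borel_measurable_def intro: Ioc_Icc_AE')
  also have "\<dots> = integral {r0..r1} (\<lambda>r. r)"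
    by (rule set_borel_integral_eq_integral(2), rule set_integrable_bnd[where K="r1"]) (use r in auto)
  also have "\<dots> = (r1^2 - r0^2) / 2"
  proof -
    have "((\<lambda>r. r) has_integral ((\<lambda>r. r^2/2) r1 - (\<lambda>r. r^2/2) r0)) {r0..r1}"
    proof (rule fundamental_theorem_of_calculus)
      show "r0 \<le> r1" by (rule r(2))
      fix x assume "x \<in> {r0..r1}"
      have "((\<lambda>r. r^2/2) has_real_derivative x) (at x within {r0..r1})"
        by (rule derivative_eq_intros refl | simp)+
      then show "((\<lambda>r. r^2/2) has_vector_derivative x) (at x within {r0..r1})"
        by (simp add: has_real_derivative_iff_has_vector_derivative)
    qed
    then show ?thesis by (simp add: integral_unique diff_divide_distrib)
  qed
  finally show ?thesis .
qed

lemma ind_prod: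
  fixes A B c :: nat and h r :: real
  assumes h: "h > 0"
  shows "indicator {real A / h <.. real B / h} r * indicator {real c / h <.. (real c + 1) / h} r
    = (if A \<le> c \<and> c < B then indicator {real c / h <.. (real c + 1) / h} r else (0::real))"
proof (cases "A \<le> c \<and> c < B")
  case True
  then have "real A / h \<le> real c / h" "(real c + 1) / h \<le> real B / h"
    using h by (auto simp: divide_right_mono)
  then show ?thesis using True by (auto simp: indicator_def)
next
  case False
  then consider "real c + 1 \<le> real A" | "real B \<le> real c" by linarith
  then show ?thesis
  proof cases
    case 1
    then have "(real c + 1) / h \<le> real A / h" using h by (simp add: divide_right_mono)
    then show ?thesis using False by (auto simp: indicator_def)
  next
    case 2
    then have "real B / h \<le> real c / h" using h by (simp add: divide_right_mono)
    then show ?thesis using False by (auto simp: indicator_def)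
  qed
qed


lemma avg_bound:
  assumes MN: "M \<le> N" and i: "i < 2^M" and j: "j \<le> i"
  shows "\<bar>polar_avg (Qcell M i j) (rho N f t)\<bar> \<le> 4 * 2^N * L / t"
proof -
  define m where "m = (2::nat)^(N-M)"
  have hNn: "(2::nat)^N = 2^M * m" unfolding m_def using MN by (simp flip: power_add)
  have hN: "(2::real)^N = 2^M * real m"
    using arg_cong[OF hNn, of real] by simp
  have m0: "real m > 0" unfolding m_def by simp
  define a where "a = 2*pi*(real j/(real i+1))"
  define b where "b = 2*pi*((real j+1)/(real i+1))"
  define r0 where "r0 = real i / 2^M"
  define r1 where "r1 = (real i + 1) / 2^M"
  define S where "S = {i*m..<(i+1)*m}"
  have Q: "Qcell M i j = {r0<..r1} \<times> {a<..b}"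
    unfolding Qcell_def a_def b_def r0_def r1_def by simp
  have a0: "0 \<le> a" unfolding a_def by simp
  have "b - a = 2*pi*(((real j + 1) - real j)/(real i + 1))"
    unfolding a_def b_def by (simp only: diff_divide_distrib right_diff_distrib)
  then have ab: "b - a = 2*pi/(real i + 1)" by simp
  have "0 < 2*pi/(real i + 1)" by (simp add: pi_gt_zero)
  then have ab2: "a \<le> b" "0 < b - a" using ab by linarith+
  have r00: "0 \<le> r0" unfolding r0_def by simp
  have r01: "r0 \<le> r1" unfolding r0_def r1_def by (simp add: divide_right_mono)
  have r0e: "r0 = real (i*m) / 2^N" unfolding r0_def hN using m0 by simp
  have r1e: "r1 = real ((i+1)*m) / 2^N" unfolding r1_def hN using m0 by (simp add: field_simps)
  have r1pos: "r1 > 0" unfolding r1_def by simp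
  have Sfin: "S \<subseteq> {..<2^N}"
  proof -
    have "i + 1 \<le> 2^M" using i by simp
    then have "(i+1)*m \<le> 2^M * m" by (rule mult_right_mono) simp
    then show ?thesis unfolding S_def hNn by auto
  qed
  define K where "K = 2 * r1 * (b-a) * L / t"
  have K0: "0 \<le> K" unfolding K_def using r1pos ab2 L0 t by simp
  let ?I = "\<lambda>l::nat. {real l / 2^N <.. (real l + 1) / 2^N}"
  define Num where "Num = (LINT x:Qcell M i j|lborel. fst x * rho N f t x)"
  have Num_eq: "Num = (\<Sum>l<2^N. \<integral>r. indicator {r0<..r1} r * indicator (?I l) r * (r * Gt l a b r) \<partial>lborel)"
    unfolding Num_def Q by (rule num_eq[OF a0 ab2(1) r00 r01])
  have termb: "\<bar>\<integral>r. indicator {r0<..r1} r * indicator (?I l) r * (r * Gt l a b r) \<partial>lborel\<bar> \<le> (if l \<in> S then K else 0)"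
    if l: "l < 2^N" for l
  proof -
    have ind: "indicator {r0<..r1} r * indicator (?I l) r = (if l \<in> S then indicator (?I l) r else (0::real))" for r
      unfolding r0e r1e S_def using ind_prod[where h="2^N" and A="i*m" and B="(i+1)*m" and c=l and r=r] by simp
    show ?thesis
    proof (cases "l \<in> S")
      case True
      have q: "(real l + 1) / 2^N \<le> r1"
      proof -
        have "l + 1 \<le> (i+1)*m" using True unfolding S_def by simp
        then have "real l + 1 \<le> real ((i+1)*m)"
          by (metis of_nat_1 of_nat_add of_nat_le_iff)
        then show ?thesis unfolding r1e by (simp add: divide_right_mono)
      qed
      have "\<bar>\<integral>r. indicator (?I l) r * (r * Gt l a b r) \<partial>lborel\<bar> \<le> 2 * ((real l + 1) / 2^N) * (b-a) * L / t"
        by (rule J_bound[OF a0 ab2(1) l]) (auto simp: divide_right_mono)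
      also have "\<dots> \<le> K"
      proof -
        have "2 * ((real l + 1) / 2^N) \<le> 2 * r1" using q by (rule mult_left_mono) simp
        then have "2 * ((real l + 1) / 2^N) * (b-a) \<le> 2 * r1 * (b-a)"
          by (rule mult_right_mono) (use ab2 in auto)
        then have "2 * ((real l + 1) / 2^N) * (b-a) * L \<le> 2 * r1 * (b-a) * L"
          by (rule mult_right_mono) (use L0 in auto)
        then show ?thesis unfolding K_def using t by (intro divide_right_mono) auto
      qed
      finally show ?thesis using True by (simp add: ind)
    next
      case False
      then show ?thesis by (simp add: ind)
    qed
  qed
  have "\<bar>Num\<bar> \<le> (\<Sum>l<2^N. \<bar>\<integral>r. indicator {r0<..r1} r * indicator (?I l) r * (r * Gt l a b r) \<partial>lborel\<bar>)"
    unfolding Num_eq by (rule sum_abs)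
  also have "\<dots> \<le> (\<Sum>l<(2::nat)^N. if l \<in> S then K else 0)"
    by (rule sum_mono) (use termb in auto)
  also have "\<dots> = (\<Sum>l\<in>{..<(2::nat)^N} \<inter> S. K)" by (rule sum.inter_restrict[symmetric]) simp
  also have "\<dots> = real m * K"
  proof -
    have "{..<(2::nat)^N} \<inter> S = S" using Sfin by auto
    moreover have "card S = m" unfolding S_def by (simp add: algebra_simps)
    ultimately show ?thesis by simp
  qed
  finally have Nb: "\<bar>Num\<bar> \<le> real m * K" .
  define Den where "Den = (LINT x:Qcell M i j|lborel. fst x)"
  have Den_eq: "Den = (b - a) * ((r1^2 - r0^2) / 2)"
    unfolding Den_def Q by (rule den_eq[OF ab2(1) r00 r01])
  have rr: "(r1^2 - r0^2) / 2 \<ge> r1 / (2 * 2^M)"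
  proof -
    have "r1^2 - r0^2 = (r1 - r0) * (r1 + r0)" by (simp add: power2_eq_square algebra_simps)
    also have "r1 - r0 = 1 / 2^M" unfolding r0_def r1_def by (simp only: diff_divide_distrib[symmetric]) simp
    finally have "r1^2 - r0^2 = (r1 + r0) / 2^M" by simp
    moreover have "r1 / 2^M \<le> (r1 + r0) / 2^M" using r00 by (simp add: divide_right_mono)
    ultimately show ?thesis by simp
  qed
  have Den_ge: "Den \<ge> (b - a) * (r1 / (2 * 2^M))"
    unfolding Den_eq using rr ab2 by (intro mult_left_mono) auto
  have Dpos: "0 < (b - a) * (r1 / (2 * 2^M))" using ab2 r1pos by simp
  have Den_pos: "Den > 0" using Den_ge Dpos by linarith
  have key: "real m * K = 4 * 2^N * L / t * ((b - a) * (r1 / (2 * 2^M)))"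
    unfolding K_def hN using t by (simp add: field_simps)
  have "\<bar>polar_avg (Qcell M i j) (rho N f t)\<bar> = \<bar>Num\<bar> / Den"
    unfolding polar_avg_def Num_def[symmetric] Den_def[symmetric] using Den_pos by (simp add: abs_divide)
  also have "\<dots> \<le> 4 * 2^N * L / t"
  proof -
    have X0: "0 \<le> 4 * 2^N * L / t" using L0 t by simp
    have "\<bar>Num\<bar> \<le> 4 * 2^N * L / t * ((b - a) * (r1 / (2 * 2^M)))" using Nb key by simp
    also have "\<dots> \<le> 4 * 2^N * L / t * Den" using Den_ge X0 by (rule mult_left_mono)
    finally show ?thesis using Den_pos by (simp add: divide_le_eq)
  qed
  finally show ?thesis .
qed

end


lemma final_bound:
  assumes MN: "M \<le> N" and Q: "Q \<in> Qfam M" and c: "c > 0" and ct: "4 * 2^N / t \<le> c"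
  shows "ereal \<bar>polar_avg Q (rho N f t)\<bar> \<le> ereal c * Linf_disk (rho N f t)"
proof (cases "Linf_disk (rho N f t) = \<infinity>")
  case True
  then show ?thesis using c by simp
next
  case False
  have ae: "AE \<theta> in lborel. ereal \<bar>f 0 \<theta>\<bar> \<le> Linf_disk (rho N f t)" by (rule Linf_AE) simp
  from AE_exists_in_Ioo[OF ae, of 0 1] obtain \<theta> where "ereal \<bar>f 0 \<theta>\<bar> \<le> Linf_disk (rho N f t)" by auto
  then have "Linf_disk (rho N f t) \<noteq> -\<infinity>" by auto
  with False obtain L where Lfin: "Linf_disk (rho N f t) = ereal L" by (cases "Linf_disk (rho N f t)") auto
  from Q obtain i j where i: "i < 2^M" and j: "j \<le> i" and Qe: "Q = Qcell M i j"
    unfolding Qfam_def by auto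
  have b: "\<bar>polar_avg Q (rho N f t)\<bar> \<le> 4 * 2^N * L / t"
    unfolding Qe by (rule avg_bound[OF Lfin MN i j])
  have L0: "0 \<le> L" by (rule L0[OF Lfin])
  have "4 * 2^N * L / t = (4 * 2^N / t) * L" by simp
  also have "\<dots> \<le> c * L" using ct L0 by (rule mult_right_mono)
  finally have "\<bar>polar_avg Q (rho N f t)\<bar> \<le> c * L" using b by linarith
  then show ?thesis unfolding Lfin by simp
qed

end


theorem lemma2p7:
  "\<exists>C::real. \<forall>(N::nat) (\<kappa>::real) (f::nat \<Rightarrow> real \<Rightarrow> real).
     (0 < \<kappa> \<and> \<kappa> < 1 \<and>
      (\<forall>l<2^N. f l \<in> borel_measurable lborel
               \<and> (\<exists>B. AE \<theta> in lborel. \<bar>f l \<theta>\<bar> \<le> B)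
               \<and> (\<forall>\<theta>. f l (\<theta> + 2 * pi) = f l \<theta>)
               \<and> (LINT \<theta>:{0..2*pi}|lborel. f l \<theta>) = 0))
     \<longrightarrow> (\<forall>M\<le>N. \<forall>Q\<in>Qfam M.
           (\<forall>t::real. t \<ge> C * 2^N / \<kappa> \<longrightarrow>
              ereal \<bar>polar_avg Q (rho N f t)\<bar> \<le> ereal (\<kappa> / 4) * Linf_disk (rho N f t))
         \<and> (\<forall>t::real. t \<ge> C * 2^(M+N) \<longrightarrow>
              ereal \<bar>polar_avg Q (rho N f t)\<bar> \<le> ereal (1 / 2^M) * Linf_disk (rho N f t)))"
proof (intro exI[of _ 16] allI impI ballI conjI)
  fix N :: nat and \<kappa> :: real and f :: "nat \<Rightarrow> real \<Rightarrow> real" and M :: nat and Q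
  assume H: "0 < \<kappa> \<and> \<kappa> < 1 \<and>
      (\<forall>l<2^N. f l \<in> borel_measurable lborel
               \<and> (\<exists>B. AE \<theta> in lborel. \<bar>f l \<theta>\<bar> \<le> B)
               \<and> (\<forall>\<theta>. f l (\<theta> + 2 * pi) = f l \<theta>)
               \<and> (LINT \<theta>:{0..2*pi}|lborel. f l \<theta>) = 0)"
    and MN: "M \<le> N" and Q: "Q \<in> Qfam M"
  define fz where "fz l = (if l < 2^N then f l else (\<lambda>_. 0::real))" for l
  have rz: "rho N f t = rho N fz t" for t
    unfolding rho_def[abs_def] rho0_def fz_def by (intro ext sum.cong) auto
  have ms: "msetup fz t" if t: "t > 0" for t
  proof
    fix l
    show "fz l \<in> borel_measurable borel" using H unfolding fz_def by auto
    show "fz l (\<theta> + 2*pi) = fz l \<theta>" for \<theta> using H unfolding fz_def by auto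
    show "(LINT \<theta>:{0..2*pi}|lborel. fz l \<theta>) = 0" using H unfolding fz_def by auto
  qed (rule t)
  have k: "0 < \<kappa>" using H by simp
  show "ereal \<bar>polar_avg Q (rho N f t)\<bar> \<le> ereal (\<kappa> / 4) * Linf_disk (rho N f t)"
    if t: "16 * 2^N / \<kappa> \<le> t" for t
  proof -
    have t0: "t > 0" using t k by (smt (verit) divide_pos_pos zero_less_power)
    have "4 * 2^N / t \<le> \<kappa> / 4"
      using t k t0 by (simp add: field_simps)
    interpret X: msetup N fz t by (rule ms[OF t0])
    show ?thesis unfolding rz by (rule X.final_bound[OF MN Q]) (use k \<open>4 * 2^N / t \<le> \<kappa> / 4\<close> in auto)
  qed
  show "ereal \<bar>polar_avg Q (rho N f t)\<bar> \<le> ereal (1 / 2^M) * Linf_disk (rho N f t)"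
    if t: "16 * 2^(M+N) \<le> t" for t
  proof -
    have t0: "t > 0" using t by (smt (verit) zero_less_power)
    have "4 * 2^N / t \<le> 1 / 2^M"
      using t t0 by (simp add: field_simps power_add)
    interpret X: msetup N fz t by (rule ms[OF t0])
    show ?thesis unfolding rz by (rule X.final_bound[OF MN Q]) (use \<open>4 * 2^N / t \<le> 1 / 2^M\<close> in auto)
  qed
qed

end
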